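(* Let $\alpha$ be irrational with $\ln2/\ln3<\alpha<1$ and write $1c_\alpha=s_0s_1s_2\cdots$. Then $\Phi_{\mathbb{R}}(1c_\alpha)$ and $\Phi_{\mathbb{R}}(0c_\alpha)$ exist, $\Phi_{\mathbb{R}}(0c_\alpha)=3\Phi_{\mathbb{R}}(1c_\alpha)+1$, and for every $L\ge0$ the number $\Phi_{\mathbb{R}}(s_Ls_{L+1}\cdots)$ exists and satisfies $$\Phi_{\mathbb{R}}(0c_\alpha)\le\Phi_{\mathbb{R}}(s_Ls_{L+1}\cdots)\le\Phi_{\mathbb{R}}(1c_\alpha).$$
   Context: For $0<\alpha<1$ the Sturmian words are $1c_\alpha=(\lceil(j+1)\alpha\rceil-\lceil j\alpha\rceil)_{j\ge0}$ and $0c_\alpha=(\lfloor(j+1)\alpha\rfloor-\lfloor j\alpha\rfloor)_{j\ge0}$. For an infinite $0$-$1$ word $w$ with $1$'s at positions $d_0<d_1<\cdots$, $\Phi_{\mathbb{R}}(w)$ is the real sum $-\sum_{i\ge0}2^{d_i}/3^{i+1}$, said to exist if the series converges. *)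

theory Defs
  imports "HOL-Analysis.Analysis" "HOL-Library.Infinite_Set"
begin

definition sturm1 :: "real \<Rightarrow> nat \<Rightarrow> nat" where
  "sturm1 \<alpha> j = nat (\<lceil>(real j + 1) * \<alpha>\<rceil> - \<lceil>real j * \<alpha>\<rceil>)"

definition sturm0 :: "real \<Rightarrow> nat \<Rightarrow> nat" where
  "sturm0 \<alpha> j = nat (\<lfloor>(real j + 1) * \<alpha>\<rfloor> - \<lfloor>real j * \<alpha>\<rfloor>)"

definition ones :: "(nat \<Rightarrow> nat) \<Rightarrow> nat set" where
  "ones w = {j. w j = 1}"

text \<open>i-th term 2^(d_i)/3^(i+1) of the series; zero beyond the last 1 when there are
  only finitely many 1's (so that the series is then the finite sum).\<close>
definition phi_term :: "(nat \<Rightarrow> nat) \<Rightarrow> nat \<Rightarrow> real" where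
  "phi_term w i = (if infinite (ones w) \<or> i < card (ones w)
     then 2 ^ (enumerate (ones w) i) / 3 ^ (i + 1) else 0)"

definition Phi_exists :: "(nat \<Rightarrow> nat) \<Rightarrow> bool" where
  "Phi_exists w \<longleftrightarrow> summable (phi_term w)"

definition PhiR :: "(nat \<Rightarrow> nat) \<Rightarrow> real" where
  "PhiR w = - (\<Sum>i. phi_term w i)"

end

theory Submission imports Defs begin

lemma enum_range: "strict_mono (f::nat\<Rightarrow>nat) \<Longrightarrow> enumerate (range f) n = f n"
proof (induction n arbitrary: f)
  case 0
  show ?case unfolding enumerate_0
    by (rule Least_equality) (auto simp: strict_mono_less_eq[OF 0])
next
  case (Suc n)
  have L: "(LEAST n. n \<in> range f) = f 0"
    by (rule Least_equality) (auto simp: strict_mono_less_eq[OF Suc.prems])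
  have R: "range f - {f 0} = range (\<lambda>i. f (Suc i))"
  proof safe
    fix x assume "f x \<notin> range (\<lambda>i. f (Suc i))"
    then show "f x = f 0" by (cases x) auto
  next
    fix x assume "f (Suc x) = f 0" then show False
      using strict_monoD[OF Suc.prems, of 0 "Suc x"] by simp
  qed auto
  have sm: "strict_mono (\<lambda>i. f (Suc i))"
    using Suc.prems by (auto simp: strict_mono_def)
  show ?case unfolding enumerate_Suc L R using Suc.IH[OF sm] .
qed

lemma phi_term_range:
  assumes "strict_mono (f::nat\<Rightarrow>nat)" "ones w = range f"
  shows "phi_term w i = 2 ^ f i / 3 ^ (i+1)"
proof -
  have "infinite (range f)"
    using range_inj_infinite strict_mono_imp_inj_on[OF assms(1)] by blast
  then show ?thesis using assms enum_range by (simp add: phi_term_def)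
qed

definition D :: "real \<Rightarrow> nat \<Rightarrow> nat" where "D a i = nat \<lfloor>real i / a\<rfloor>"

context
  fixes a :: real
  assumes irr: "a \<notin> \<rat>" and lo: "ln 2 / ln 3 < a" and hi: "a < 1"
begin

lemma apos: "a > 0"
proof -
  have "ln 2 / ln 3 > (0::real)" by simp
  then show ?thesis using lo by linarith
qed

lemma D_real: "real (D a i) = real_of_int \<lfloor>real i / a\<rfloor>"
  using apos by (simp add: D_def)

lemma D_strict: "strict_mono (D a)"
proof (rule strict_monoI_Suc)
  fix i
  have "real (Suc i) / a = real i / a + 1 / a" by (simp add: add_divide_distrib)
  moreover have "1 / a > 1" using apos hi by simp
  ultimately have "real i / a + 1 \<le> real (Suc i) / a" by linarith
  then have "\<lfloor>real i / a + 1\<rfloor> \<le> \<lfloor>real (Suc i) / a\<rfloor>" by (rule floor_mono)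
  then have "\<lfloor>real i / a\<rfloor> < \<lfloor>real (Suc i) / a\<rfloor>" by simp
  moreover have "0 \<le> \<lfloor>real i / a\<rfloor>" using apos by simp
  ultimately show "D a i < D a (Suc i)" unfolding D_def by linarith
qed


lemma D_0: "D a 0 = 0" by (simp add: D_def)

lemma D_iff: "D a i = j \<longleftrightarrow> real j * a \<le> real i \<and> real i < (real j + 1) * a"
proof -
  have "D a i = j \<longleftrightarrow> \<lfloor>real i / a\<rfloor> = int j" using apos unfolding D_def by auto
  also have "\<dots> \<longleftrightarrow> real j \<le> real i / a \<and> real i / a < real j + 1"
    by (simp add: floor_eq_iff)
  also have "\<dots> \<longleftrightarrow> real j * a \<le> real i \<and> real i < (real j + 1) * a"
    using apos by (simp add: pos_le_divide_eq pos_divide_less_eq)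
  finally show ?thesis .
qed

lemma sturm1_one: "sturm1 a j = 1 \<longleftrightarrow> j \<in> range (D a)"
proof -
  have e: "sturm1 a j = 1 \<longleftrightarrow> \<lceil>(real j + 1) * a\<rceil> = \<lceil>real j * a\<rceil> + 1"
    unfolding sturm1_def by auto
  have up: "\<lceil>(real j + 1) * a\<rceil> \<le> \<lceil>real j * a\<rceil> + 1"
  proof -
    have "(real j + 1) * a \<le> real j * a + 1" using hi by (simp add: algebra_simps)
    then have "\<lceil>(real j + 1) * a\<rceil> \<le> \<lceil>real j * a + 1\<rceil>" by (rule ceiling_mono)
    then show ?thesis by simp
  qed
  have "0 \<le> real j * a" using apos by simp
  then have nn: "0 \<le> \<lceil>real j * a\<rceil>" by linarith
  show ?thesis
  proof
    assume h: "sturm1 a j = 1"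
    define i where "i = \<lceil>real j * a\<rceil>"
    have r: "real (nat i) = real_of_int i" using nn i_def by simp
    have "real j * a \<le> real_of_int i" unfolding i_def by simp
    moreover have "real_of_int i < (real j + 1) * a"
    proof -
      have "\<not> \<lceil>(real j + 1) * a\<rceil> \<le> i" using h e i_def by simp
      then show ?thesis by (simp add: ceiling_le_iff)
    qed
    ultimately have "D a (nat i) = j" using D_iff r by simp
    then show "j \<in> range (D a)" by (metis rangeI)
  next
    assume "j \<in> range (D a)"
    then obtain i where "j = D a i" by auto
    then have b: "real j * a \<le> real i" "real i < (real j + 1) * a" using D_iff by auto
    have "\<lceil>real j * a\<rceil> \<le> int i" using b(1) by (simp add: ceiling_le_iff)
    moreover have "int i < \<lceil>(real j + 1) * a\<rceil>" using b(2) by (simp add: less_ceiling_iff)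
    ultimately show "sturm1 a j = 1" using e up by linarith
  qed
qed

lemma not_int: "0 < n \<Longrightarrow> real n * a \<noteq> real_of_int k"
proof
  assume "0 < n" "real n * a = real_of_int k"
  then have "a = real_of_int k / real n" by (simp add: field_simps)
  then have "a \<in> \<rat>" by simp
  then show False using irr by simp
qed

lemma ceil_floor: "0 < n \<Longrightarrow> \<lceil>real n * a\<rceil> = \<lfloor>real n * a\<rfloor> + 1"
  using not_int by (simp add: ceiling_altdef)

lemma sturm0_eq: "sturm0 a j = (if j = 0 then 0 else sturm1 a j)"
proof (cases "j = 0")
  case True
  have "\<lfloor>a\<rfloor> = 0" using apos hi by (simp add: floor_eq_iff)
  then show ?thesis using True by (simp add: sturm0_def)
next
  case False
  have "\<lceil>real j * a\<rceil> = \<lfloor>real j * a\<rfloor> + 1" using False ceil_floor by simp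
  moreover have "\<lceil>real (Suc j) * a\<rceil> = \<lfloor>real (Suc j) * a\<rfloor> + 1" using ceil_floor by blast
  ultimately show ?thesis using False by (simp add: sturm0_def sturm1_def add.commute)
qed

lemma ones1: "ones (sturm1 a) = range (D a)"
  using sturm1_one by (auto simp: ones_def)

lemma ones0: "ones (sturm0 a) = range (\<lambda>i. D a (Suc i))"
proof -
  have "ones (sturm0 a) = range (D a) - {0}"
    using sturm1_one sturm0_eq by (auto simp: ones_def)
  also have "\<dots> = range (\<lambda>i. D a (Suc i))"
  proof (intro set_eqI iffI)
    fix x assume "x \<in> range (D a) - {0}"
    then obtain k where k: "x = D a k" "x \<noteq> 0" by auto
    then have "k \<noteq> 0" using D_0 by (metis)
    then show "x \<in> range (\<lambda>i. D a (Suc i))" using k by (metis not0_implies_Suc rangeI)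
  next
    fix x assume "x \<in> range (\<lambda>i. D a (Suc i))"
    then obtain k where k: "x = D a (Suc k)" by auto
    have "D a 0 < D a (Suc k)" using strict_monoD[OF D_strict, of 0 "Suc k"] by simp
    then show "x \<in> range (D a) - {0}" using k D_0 by auto
  qed
  finally show ?thesis .
qed


lemma D_int: "int (D a i) = \<lfloor>real i / a\<rfloor>"
  using apos by (simp add: D_def)

definition M :: "nat \<Rightarrow> nat" where "M L = nat \<lceil>real L * a\<rceil>"

lemma M_real: "real L * a \<le> real (M L) \<and> real (M L) < real L * a + 1"
proof -
  have "0 \<le> real L * a" using apos by simp
  then have "0 \<le> \<lceil>real L * a\<rceil>" by linarith
  then have "real (M L) = real_of_int \<lceil>real L * a\<rceil>" by (simp add: M_def)
  then show ?thesis by linarith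
qed

lemma D_lower: "D a i + L \<le> D a (M L + i)"
proof -
  have "real L \<le> real (M L) / a" using M_real apos by (simp add: pos_le_divide_eq)
  moreover have "real (M L + i) / a = real i / a + real (M L) / a" by (simp add: add_divide_distrib)
  moreover have "real_of_int \<lfloor>real i / a\<rfloor> \<le> real i / a" by simp
  ultimately have "real_of_int \<lfloor>real i / a\<rfloor> + real L \<le> real (M L + i) / a" by linarith
  then have "\<lfloor>real i / a\<rfloor> + int L \<le> \<lfloor>real (M L + i) / a\<rfloor>"
    by (subst le_floor_iff) simp
  then have "int (D a i + L) \<le> int (D a (M L + i))" using D_int by simp
  then show ?thesis by linarith
qed

lemma D_upper: "D a (M L + i) \<le> D a (Suc i) + L"
proof -
  have "real (M L) - 1 < real L * a" using M_real[of L] by linarith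
  then have "(real (M L) - 1) / a < real L" using apos by (simp add: pos_divide_less_eq)
  moreover have "real (M L + i) / a = real (Suc i) / a + (real (M L) - 1) / a"
    by (simp add: add_divide_distrib diff_divide_distrib)
  moreover have "real (Suc i) / a < real_of_int \<lfloor>real (Suc i) / a\<rfloor> + 1" by simp
  ultimately have "real (M L + i) / a < real_of_int \<lfloor>real (Suc i) / a\<rfloor> + real L + 1" by linarith
  then have "\<lfloor>real (M L + i) / a\<rfloor> \<le> \<lfloor>real (Suc i) / a\<rfloor> + int L"
    by (subst floor_le_iff) simp
  then have "int (D a (M L + i)) \<le> int (D a (Suc i) + L)" using D_int by simp
  then show ?thesis by linarith
qed

lemma D_below: "k < M L \<Longrightarrow> D a k < L"
proof -
  assume "k < M L"
  then have "real k + 1 \<le> real (M L)" by linarith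
  then have "real k < real L * a" using M_real[of L] by linarith
  then have "real k / a < real L" using apos by (simp add: pos_divide_less_eq)
  then have "\<lfloor>real k / a\<rfloor> < int L" by (simp add: floor_less_iff)
  then show ?thesis using D_int[of k] by linarith
qed

lemma D_atM: "L \<le> D a (M L + i)"
  using D_lower[of i L] by linarith

lemma ones_shift: "ones (\<lambda>j. sturm1 a (L + j)) = range (\<lambda>i. D a (M L + i) - L)"
proof (intro set_eqI iffI)
  fix j assume "j \<in> ones (\<lambda>j. sturm1 a (L + j))"
  then obtain k where k: "L + j = D a k" using sturm1_one by (auto simp: ones_def)
  have "\<not> k < M L" using D_below[of k L] k by linarith
  then have "k = M L + (k - M L)" by simp
  then have "j = D a (M L + (k - M L)) - L" using k by simp
  then show "j \<in> range (\<lambda>i. D a (M L + i) - L)" by blast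
next
  fix j assume "j \<in> range (\<lambda>i. D a (M L + i) - L)"
  then obtain i where i: "j = D a (M L + i) - L" by auto
  then have "L + j = D a (M L + i)" using D_atM[of L i] by simp
  then show "j \<in> ones (\<lambda>j. sturm1 a (L + j))" using sturm1_one by (auto simp: ones_def)
qed

lemma shift_strict: "strict_mono (\<lambda>i. D a (M L + i) - L)"
proof (rule strict_monoI_Suc)
  fix i
  have "D a (M L + i) < D a (M L + Suc i)" using strict_monoD[OF D_strict] by simp
  then show "D a (M L + i) - L < D a (M L + Suc i) - L" using D_atM[of L i] by linarith
qed


definition A :: "nat \<Rightarrow> real" where "A i = 2 ^ D a i / 3 ^ (i + 1)"

lemma r_lt: "2 powr (1 / a) < 3"
proof -
  have l3: "ln 3 > (0::real)" by simp
  have "ln 2 < a * ln 3" using lo l3 by (simp add: pos_divide_less_eq mult.commute)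
  then have "(1 / a) * ln 2 < ln 3" using apos by (simp add: field_simps)
  then have "exp ((1 / a) * ln 2) < exp (ln 3)" by (rule exp_less_mono)
  then have "exp ((1 / a) * ln 2) < 3" by simp
  then show ?thesis by (simp add: powr_def mult.commute)
qed

lemma pow_bound: "(2::real) ^ D a i \<le> (2 powr (1 / a)) ^ i"
proof -
  have "real (D a i) \<le> real i / a" using D_real[of i] by linarith
  then have "(2::real) powr real (D a i) \<le> 2 powr (real i / a)" by (rule powr_mono) simp
  also have "\<dots> = (2 powr (1 / a)) powr real i" by (simp add: powr_powr)
  also have "\<dots> = (2 powr (1 / a)) ^ i" by (simp add: powr_realpow)
  finally show ?thesis by (simp add: powr_realpow)
qed

lemma A_summable: "summable A"
proof (rule summable_comparison_test)
  let ?r = "2 powr (1 / a) / 3"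
  have r0: "0 \<le> ?r" by simp
  have r1: "?r < 1" using r_lt by simp
  show "summable (\<lambda>i. (1/3) * ?r ^ i)"
    by (rule summable_mult) (rule summable_geometric, use r0 r1 in simp)
  show "\<exists>N. \<forall>n\<ge>N. norm (A n) \<le> (1/3) * ?r ^ n"
  proof (intro exI allI impI)
    fix n
    have "norm (A n) = 2 ^ D a n / 3 ^ (n + 1)" by (simp add: A_def)
    also have "\<dots> \<le> (2 powr (1 / a)) ^ n / 3 ^ (n+1)"
      using pow_bound by (simp add: divide_right_mono)
    also have "\<dots> = (1/3) * ?r ^ n" by (simp add: power_divide)
    finally show "norm (A n) \<le> (1/3) * ?r ^ n" .
  qed
qed


lemma main: "Phi_exists (sturm1 a) \<and> Phi_exists (sturm0 a)
    \<and> PhiR (sturm0 a) = 3 * PhiR (sturm1 a) + 1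
    \<and> (\<forall>L::nat. Phi_exists (\<lambda>j. sturm1 a (L + j))
         \<and> PhiR (sturm0 a) \<le> PhiR (\<lambda>j. sturm1 a (L + j))
         \<and> PhiR (\<lambda>j. sturm1 a (L + j)) \<le> PhiR (sturm1 a))"
proof -
  have p1: "phi_term (sturm1 a) = A"
    using phi_term_range[OF D_strict ones1] by (auto simp: A_def)
  have sm0: "strict_mono (\<lambda>i. D a (Suc i))"
    using D_strict by (auto simp: strict_mono_def)
  have p0: "phi_term (sturm0 a) = (\<lambda>i. 3 * A (Suc i))"
    using phi_term_range[OF sm0 ones0] by (auto simp: A_def)
  have sA: "summable A" by (rule A_summable)
  have sC: "summable (\<lambda>i. 3 * A (Suc i))"
    using sA by (intro summable_mult) (simp add: summable_Suc_iff)
  have A0: "A 0 = 1/3" by (simp add: A_def D_0)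
  have sumC: "(\<Sum>i. 3 * A (Suc i)) = 3 * (\<Sum>i. A i) - 1"
    using suminf_mult[of "\<lambda>i. A (Suc i)" 3] suminf_split_head[OF sA] sA A0
    by (simp add: summable_Suc_iff)
  have shift: "Phi_exists (\<lambda>j. sturm1 a (L + j))
         \<and> PhiR (sturm0 a) \<le> PhiR (\<lambda>j. sturm1 a (L + j))
         \<and> PhiR (\<lambda>j. sturm1 a (L + j)) \<le> PhiR (sturm1 a)" for L
  proof -
    define B where "B i = (2::real) ^ (D a (M L + i) - L) / 3 ^ (i + 1)" for i
    have pB: "phi_term (\<lambda>j. sturm1 a (L + j)) = B"
      using phi_term_range[OF shift_strict ones_shift] by (auto simp: B_def)
    have AB: "A i \<le> B i" for i
    proof -
      have "D a i \<le> D a (M L + i) - L" using D_lower[of i L] by linarith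
      then have "(2::real) ^ D a i \<le> 2 ^ (D a (M L + i) - L)" by (rule power_increasing) simp
      then show ?thesis unfolding A_def B_def by (simp add: divide_right_mono)
    qed
    have BC: "B i \<le> 3 * A (Suc i)" for i
    proof -
      have "D a (M L + i) - L \<le> D a (Suc i)" using D_upper[of L i] by linarith
      then have "(2::real) ^ (D a (M L + i) - L) \<le> 2 ^ D a (Suc i)" by (rule power_increasing) simp
      then show ?thesis unfolding A_def B_def by (simp add: divide_right_mono)
    qed
    have sB: "summable B"
    proof (rule summable_comparison_test)
      show "\<exists>N. \<forall>n\<ge>N. norm (B n) \<le> 3 * A (Suc n)"
        using BC by (auto simp: B_def)
    qed (rule sC)
    have "suminf A \<le> suminf B" by (rule suminf_le[OF AB sA sB])
    moreover have "suminf B \<le> (\<Sum>i. 3 * A (Suc i))" by (rule suminf_le[OF BC sB sC])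
    ultimately show ?thesis using sB
      by (simp add: Phi_exists_def PhiR_def pB p0 p1)
  qed
  show ?thesis using shift sA sC sumC
    by (simp add: Phi_exists_def PhiR_def p0 p1)
qed

end

theorem lemma25:
  fixes \<alpha> :: real
  assumes "\<alpha> \<notin> \<rat>" and "ln 2 / ln 3 < \<alpha>" and "\<alpha> < 1"
  shows "Phi_exists (sturm1 \<alpha>) \<and> Phi_exists (sturm0 \<alpha>)
    \<and> PhiR (sturm0 \<alpha>) = 3 * PhiR (sturm1 \<alpha>) + 1
    \<and> (\<forall>L::nat. Phi_exists (\<lambda>j. sturm1 \<alpha> (L + j))
         \<and> PhiR (sturm0 \<alpha>) \<le> PhiR (\<lambda>j. sturm1 \<alpha> (L + j))
         \<and> PhiR (\<lambda>j. sturm1 \<alpha> (L + j)) \<le> PhiR (sturm1 \<alpha>))"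
  by (rule main[OF assms])

end
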